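(* Let $L \ge N$, let $\mathbf{T} \in \mathbb{R}^{L\times N}$ have full rank $N$, and let $\gamma>0$. Define $H:\mathbb{R}^N\rightrightarrows\mathbb{R}^N$ by $\mathbf{y}\in H(\mathbf{x})$ if and only if $\mathbf{x} = \mathbf{T}^{\dagger}S_\gamma\mathbf{T}(\mathbf{x}+\mathbf{y})$. Let $$\mathcal{U}_{\mathbf{T},\gamma} := \{\mathbf{x}\in\mathbb{R}^N : |(\mathbf{T}\mathbf{x})_j| > \gamma(\|\mathbf{T}\mathbf{T}^{\dagger}\|_\infty + 1)\ \text{for all } j=1,\dots,L\}.$$ Then for every $\mathbf{x}\in\mathcal{U}_{\mathbf{T},\gamma}$ the set $H(\mathbf{x})$ consists of exactly one element, namely $H(\mathbf{x}) = \{\gamma\,\mathbf{T}^{\dagger}\operatorname{sign}(\mathbf{T}\mathbf{x})\}$.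
   Context: $\mathbf{T}^*$ is the transpose, $\mathbf{T}^{\dagger}=(\mathbf{T}^*\mathbf{T})^{-1}\mathbf{T}^*$ the Moore–Penrose inverse. $S_\gamma:\mathbb{R}^L\to\mathbb{R}^L$ is componentwise soft shrinkage: $[S_\gamma(\mathbf{y})]_j = y_j-\gamma$ if $y_j\ge\gamma$, $y_j+\gamma$ if $y_j\le-\gamma$, $0$ if $|y_j|<\gamma$. $\|\mathbf{A}\|_\infty = \max_{\|\mathbf{z}\|_\infty=1}\|\mathbf{A}\mathbf{z}\|_\infty$ is the row-sum matrix norm, with $\|\mathbf{z}\|_\infty=\max_j|z_j|$. For $\mathbf{z}\in\mathbb{R}^L$ with no zero components, $\operatorname{sign}\mathbf{z} = (\operatorname{sign} z_j)_{j=1}^L$ with $\operatorname{sign} z_j = 1$ if $z_j>0$ and $-1$ if $z_j<0$. *)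

theory Defs
  imports "HOL-Analysis.Analysis"
begin

definition vec_inf_norm :: "real ^ 'n \<Rightarrow> real" where
  "vec_inf_norm z = Max (range (\<lambda>j. \<bar>z $ j\<bar>))"

definition mat_inf_norm :: "real ^ 'n ^ 'm \<Rightarrow> real" where
  "mat_inf_norm A = Sup {vec_inf_norm (A *v z) | z. vec_inf_norm z = 1}"

text \<open>Moore--Penrose inverse for a full column rank matrix: (T^* T)^{-1} T^*.\<close>
definition pinv :: "real ^ 'n ^ 'l \<Rightarrow> real ^ 'l ^ 'n" where
  "pinv T = matrix_inv (transpose T ** T) ** transpose T"

definition soft_shrink :: "real \<Rightarrow> real ^ 'l \<Rightarrow> real ^ 'l" where
  "soft_shrink \<gamma> y = (\<chi> j. if y $ j \<ge> \<gamma> then y $ j - \<gamma>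
                           else if y $ j \<le> - \<gamma> then y $ j + \<gamma> else 0)"

text \<open>Componentwise sign (only used on vectors with no zero components).\<close>
definition vsign :: "real ^ 'l \<Rightarrow> real ^ 'l" where
  "vsign z = (\<chi> j. sgn (z $ j))"

definition Hmap :: "real ^ 'n ^ 'l \<Rightarrow> real \<Rightarrow> real ^ 'n \<Rightarrow> (real ^ 'n) set" where
  "Hmap T \<gamma> x = {y. x = pinv T *v soft_shrink \<gamma> (T *v (x + y))}"

definition U_set :: "real ^ 'n ^ 'l \<Rightarrow> real \<Rightarrow> (real ^ 'n) set" where
  "U_set T \<gamma> = {x. \<forall>j. \<bar>(T *v x) $ j\<bar> > \<gamma> * (mat_inf_norm (T ** pinv T) + 1)}"

end

theory Submission
  imports Defs
begin

lemma vin_ge: "\<bar>v $ j\<bar> \<le> vec_inf_norm v"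
  unfolding vec_inf_norm_def by (rule Max_ge) auto

lemma vin_le_iff: "vec_inf_norm v \<le> c \<longleftrightarrow> (\<forall>j. \<bar>v $ j\<bar> \<le> c)"
  unfolding vec_inf_norm_def by (subst Max_le_iff) auto

lemma vin_attained: "\<exists>j. \<bar>v $ j\<bar> = vec_inf_norm v"
proof -
  have "vec_inf_norm v \<in> range (\<lambda>j. \<bar>v $ j\<bar>)"
    unfolding vec_inf_norm_def by (rule Max_in) auto
  then show ?thesis by auto
qed

lemma comp_bound:
  fixes A :: "real ^ 'n ^ 'm"
  assumes "vec_inf_norm z \<le> 1"
  shows "\<bar>(A *v z) $ j\<bar> \<le> (\<Sum>i\<in>UNIV. \<Sum>k\<in>UNIV. \<bar>A $ i $ k\<bar>)"
proof -
  have "\<bar>(A *v z) $ j\<bar> = \<bar>\<Sum>k\<in>UNIV. A $ j $ k * z $ k\<bar>"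
    by (simp add: matrix_vector_mult_def)
  also have "\<dots> \<le> (\<Sum>k\<in>UNIV. \<bar>A $ j $ k * z $ k\<bar>)" by (rule sum_abs)
  also have "\<dots> \<le> (\<Sum>k\<in>UNIV. \<bar>A $ j $ k\<bar>)"
  proof (rule sum_mono)
    fix k
    have "\<bar>z $ k\<bar> \<le> 1" using assms vin_le_iff by blast
    then show "\<bar>A $ j $ k * z $ k\<bar> \<le> \<bar>A $ j $ k\<bar>"
      by (simp add: abs_mult mult_left_le)
  qed
  also have "\<dots> \<le> (\<Sum>i\<in>UNIV. \<Sum>k\<in>UNIV. \<bar>A $ i $ k\<bar>)"
    by (rule member_le_sum[where f="\<lambda>i. \<Sum>k\<in>UNIV. \<bar>A $ i $ k\<bar>"]) (auto intro: sum_nonneg)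
  finally show ?thesis .
qed

lemma mat_norm_props:
  fixes A :: "real ^ 'n ^ 'm"
  shows "mat_inf_norm A \<ge> 0"
    and "vec_inf_norm w \<le> 1 \<Longrightarrow> \<bar>(A *v w) $ j\<bar> \<le> mat_inf_norm A"
proof -
  let ?S = "{vec_inf_norm (A *v z) | z. vec_inf_norm z = 1}"
  have bdd: "bdd_above ?S"
  proof (rule bdd_aboveI)
    fix x assume "x \<in> ?S"
    then obtain z where x: "x = vec_inf_norm (A *v z)" and z: "vec_inf_norm z = 1" by auto
    show "x \<le> (\<Sum>i\<in>UNIV. \<Sum>k\<in>UNIV. \<bar>A $ i $ k\<bar>)"
      unfolding x vin_le_iff using comp_bound[of z A] z by auto
  qed
  have up: "vec_inf_norm (A *v z) \<le> mat_inf_norm A" if "vec_inf_norm z = 1" for z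
    unfolding mat_inf_norm_def by (rule cSup_upper[OF _ bdd]) (use that in auto)
  have one: "vec_inf_norm (vec 1 :: real ^ 'n) = 1"
    unfolding vec_inf_norm_def by simp
  have "0 \<le> vec_inf_norm (A *v vec 1)"
    using vin_ge[of "A *v vec 1"] by (meson abs_ge_zero order_trans)
  then show M0: "mat_inf_norm A \<ge> 0" using up[OF one] by linarith
  assume w: "vec_inf_norm w \<le> 1"
  define c where "c = vec_inf_norm w"
  show "\<bar>(A *v w) $ j\<bar> \<le> mat_inf_norm A"
  proof (cases "c = 0")
    case True
    then have "w = 0" using vin_ge[of w] by (simp add: vec_eq_iff c_def)
    then show ?thesis using M0 by simp
  next
    case False
    then have cpos: "c > 0" using vin_ge[of w undefined] c_def by (smt (verit) abs_ge_zero)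
    define z where "z = (1/c) *\<^sub>R w"
    have "vec_inf_norm z \<le> 1" unfolding vin_le_iff z_def
    proof
      fix k show "\<bar>((1 / c) *\<^sub>R w) $ k\<bar> \<le> 1"
        using vin_ge[of w k] cpos by (simp add: c_def abs_mult)
    qed
    moreover obtain k where "\<bar>w $ k\<bar> = c" using vin_attained c_def by metis
    then have "\<bar>z $ k\<bar> = 1" using cpos by (simp add: z_def abs_mult)
    then have "1 \<le> vec_inf_norm z" using vin_ge[of z k] by simp
    ultimately have "vec_inf_norm z = 1" by simp
    then have "\<bar>(A *v z) $ j\<bar> \<le> mat_inf_norm A" using up vin_ge order_trans by blast
    moreover have "w = c *\<^sub>R z" using cpos by (simp add: z_def)
    then have "(A *v w) $ j = c * (A *v z) $ j" by (simp add: matrix_vector_mult_scaleR)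
    ultimately have "\<bar>(A *v w) $ j\<bar> \<le> c * mat_inf_norm A"
      using cpos by (simp add: abs_mult)
    also have "\<dots> \<le> mat_inf_norm A" using c_def w M0 cpos by (simp add: mult_left_le_one_le mult_le_cancel_right1)
    finally show ?thesis .
  qed
qed

lemma pinv_left:
  fixes T :: "real ^ 'n ^ 'l"
  assumes "rank T = CARD('n)"
  shows "pinv T ** T = mat 1"
proof -
  let ?G = "transpose T ** T"
  have inj: "inj ((*v) T)" using assms full_rank_injective by blast
  have "\<forall>x. ?G *v x = 0 \<longrightarrow> x = 0"
  proof (intro allI impI)
    fix x assume "?G *v x = 0"
    then have "inner x (transpose T *v (T *v x)) = 0" by (simp add: matrix_vector_mul_assoc)
    moreover have "inner x (transpose T *v (T *v x)) = inner (T *v x) (T *v x)"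
      by (metis dot_lmul_matrix transpose_matrix_vector transpose_transpose)
    ultimately have "T *v x = 0" by simp
    then show "x = 0" using inj by (metis matrix_vector_mult_0_right injD)
  qed
  then have "\<exists>B. B ** ?G = mat 1" using matrix_left_invertible_ker by blast
  then have "invertible ?G" using invertible_left_inverse by blast
  then have "?G ** matrix_inv ?G = mat 1 \<and> matrix_inv ?G ** ?G = mat 1"
    unfolding invertible_def matrix_inv_def by (rule someI_ex)
  then show ?thesis unfolding pinv_def by (simp add: matrix_mul_assoc)
qed


theorem theorem2p7:
  fixes T :: "real ^ 'n ^ 'l" and \<gamma> :: real
  assumes "CARD('n) \<le> CARD('l)"
    and "rank T = CARD('n)"
    and "\<gamma> > 0"
    and "x \<in> U_set T \<gamma>"
  shows "Hmap T \<gamma> x = {\<gamma> *\<^sub>R (pinv T *v vsign (T *v x))}"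
proof -
  define P where "P = pinv T"
  define Q where "Q = T ** P"
  define M where "M = mat_inf_norm Q"
  define s where "s = vsign (T *v x)"
  have PT: "P ** T = mat 1" using pinv_left[OF assms(2)] by (simp add: P_def)
  have PTv: "P *v (T *v v) = v" for v by (simp add: matrix_vector_mul_assoc PT)
  have PQ: "P *v (Q *v v) = P *v v" for v
    by (simp add: Q_def matrix_vector_mul_assoc[symmetric] PTv)
  have M0: "M \<ge> 0" unfolding M_def by (rule mat_norm_props(1))
  have hx: "\<gamma> * (M + 1) < \<bar>(T *v x) $ j\<bar>" for j
    using assms(4) by (simp add: U_set_def M_def Q_def P_def)
  have s1: "vec_inf_norm s \<le> 1" unfolding vin_le_iff s_def vsign_def
    by (simp add: abs_sgn_eq)
  have key: "soft_shrink \<gamma> (T *v x + \<gamma> *\<^sub>R (Q *v \<sigma>)) = T *v x + \<gamma> *\<^sub>R (Q *v \<sigma>) - \<gamma> *\<^sub>R s"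
    if "vec_inf_norm \<sigma> \<le> 1" for \<sigma>
  proof -
    have "\<bar>(Q *v \<sigma>) $ j\<bar> \<le> M" for j unfolding M_def by (rule mat_norm_props(2)[OF that])
    then have b: "\<bar>\<gamma> * (Q *v \<sigma>) $ j\<bar> \<le> \<gamma> * M" for j
      using assms(3) by (simp add: abs_mult)
    show ?thesis
    proof (subst vec_eq_iff, intro allI)
      fix j
      have hj: "\<gamma> * (M + 1) < \<bar>(T *v x) $ j\<bar>" by (rule hx)
      have hj: "\<gamma> * M + \<gamma> < \<bar>(T *v x) $ j\<bar>" using hj by (simp add: algebra_simps)
      have bj: "- (\<gamma> * M) \<le> \<gamma> * (Q *v \<sigma>) $ j \<and> \<gamma> * (Q *v \<sigma>) $ j \<le> \<gamma> * M" using b[of j] by linarith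
      show "soft_shrink \<gamma> (T *v x + \<gamma> *\<^sub>R (Q *v \<sigma>)) $ j = (T *v x + \<gamma> *\<^sub>R (Q *v \<sigma>) - \<gamma> *\<^sub>R s) $ j"
      proof (cases "(T *v x) $ j > 0")
        case True
        then show ?thesis using hj bj assms(3)
          by (auto simp: soft_shrink_def s_def vsign_def)
      next
        case False
        have gM: "0 \<le> \<gamma> * M" using M0 assms(3) by simp
        have neg: "(T *v x) $ j < 0" using False hj gM assms(3) by auto
        have "(T *v x) $ j + \<gamma> * (Q *v \<sigma>) $ j \<le> - \<gamma>" using neg hj bj by linarith
        moreover have "\<not> (T *v x) $ j + \<gamma> * (Q *v \<sigma>) $ j \<ge> \<gamma>" using calculation assms(3) by linarith
        ultimately show ?thesis using neg
          by (simp add: soft_shrink_def s_def vsign_def)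
      qed
    qed
  qed
  have lin: "T *v (x + \<gamma> *\<^sub>R (P *v v)) = T *v x + \<gamma> *\<^sub>R (Q *v v)" for v
    by (simp add: matrix_vector_right_distrib matrix_vector_mult_scaleR Q_def matrix_vector_mul_assoc)
  have ex: "\<gamma> *\<^sub>R (P *v s) \<in> Hmap T \<gamma> x"
  proof -
    have "P *v soft_shrink \<gamma> (T *v (x + \<gamma> *\<^sub>R (P *v s))) = x"
      unfolding lin key[OF s1]
      by (simp add: matrix_vector_mult_diff_distrib matrix_vector_right_distrib
          matrix_vector_mult_scaleR PQ PTv)
    then show ?thesis unfolding Hmap_def P_def by simp
  qed
  have un: "y = \<gamma> *\<^sub>R (P *v s)" if "y \<in> Hmap T \<gamma> x" for y
  proof -
    have hy: "x = P *v soft_shrink \<gamma> (T *v (x + y))" using that by (simp add: Hmap_def P_def)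
    define z where "z = T *v (x + y)"
    define \<sigma> :: "real ^ 'l" where "\<sigma> = (\<chi> j. if z $ j \<ge> \<gamma> then 1 else if z $ j \<le> - \<gamma> then -1 else z $ j / \<gamma>)"
    have Sz: "soft_shrink \<gamma> z = z - \<gamma> *\<^sub>R \<sigma>"
      using assms(3) by (simp add: vec_eq_iff soft_shrink_def \<sigma>_def)
    have sig1: "vec_inf_norm \<sigma> \<le> 1" unfolding vin_le_iff \<sigma>_def
      using assms(3) by (auto simp: abs_if divide_simps)
    have "x = P *v z - \<gamma> *\<^sub>R (P *v \<sigma>)" using hy[folded z_def]
      by (simp add: Sz matrix_vector_mult_diff_distrib matrix_vector_mult_scaleR)
    also have "P *v z = x + y" by (simp add: z_def PTv)
    finally have y: "y = \<gamma> *\<^sub>R (P *v \<sigma>)" by (simp add: algebra_simps)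
    have "z = T *v x + \<gamma> *\<^sub>R (Q *v \<sigma>)" unfolding z_def y lin ..
    then have "z - \<gamma> *\<^sub>R \<sigma> = z - \<gamma> *\<^sub>R s" using key[OF sig1] Sz by metis
    then have "\<sigma> = s" using assms(3) by simp
    then show ?thesis using y by simp
  qed
  show ?thesis using ex un unfolding P_def s_def by blast
qed

end
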